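(* Fix $\theta=(A,D,\omega)\in(\epsilon,1-\epsilon)^{2p+1}$, $\gamma\in\Gamma$, $k\in\{0,1\}^p$ with $p_k=\sum_jk_j\ge1$, and an ordering $(K_1,\dots,K_{p_k})$ of $\{j:k_j=1\}$. Let $\gamma(0)=\gamma,\gamma(1),\dots,\gamma(p_k)=\gamma'$ be a path of the forward PARNI proposal, i.e. for each $r$, $\gamma(r)\in\{\gamma(r-1),\gamma(r-1)^{(K_r)}\}$. Define the forward proposal probability $q(\gamma,\gamma')=\prod_{r=1}^{p_k}s_{K_r}(\gamma(r-1),\gamma(r))$ and the reverse proposal probability $q'(\gamma',\gamma)=\prod_{r=1}^{p_k}s_{K_{p_k-r+1}}(\gamma(p_k-r+1),\gamma(p_k-r))$ (the reverse move uses the reversed ordering and traverses the same path backwards). Let $Z(r)=Z_{K_r}(\gamma(r-1))$ and $Z'(r)=Z_{K_{p_k-r+1}}(\gamma(p_k-r+1))$. Then $$\frac{\pi(\gamma')\,p^{\mathrm{RN}}_\eta(k\mid\gamma')\,q'(\gamma',\gamma)}{\pi(\gamma)\,p^{\mathrm{RN}}_\eta(k\mid\gamma)\,q(\gamma,\gamma')}=\prod_{r=1}^{p_k}\frac{Z(r)}{Z'(r)},$$ so that the PARNI Metropolis–Hastings acceptance probability equals $\min\{1,\prod_{r=1}^{p_k}Z(r)/Z'(r)\}$.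
   Context: $\Gamma=\{0,1\}^p$; $\pi$ is an everywhere positive probability mass function on $\Gamma$. $g:(0,\infty)\to(0,\infty)$ is continuous and a balancing function: $g(t)=t\,g(1/t)$ for all $t>0$. $\epsilon\in(0,1/2)$, $\eta=(A,D)$. $p^{\mathrm{RN}}_\eta(k\mid\gamma)=\prod_jp_j(k_j\mid\gamma_j)$ with $p_j(1\mid0)=A_j$, $p_j(0\mid0)=1-A_j$, $p_j(1\mid1)=D_j$, $p_j(0\mid1)=1-D_j$. For $x\in\Gamma$ and a coordinate $j$, $x^{(j)}$ denotes $x$ with coordinate $j$ flipped. Define $t_j(x)=\frac{\pi(x^{(j)})\,p_j(1\mid x^{(j)}_j)}{\pi(x)\,p_j(1\mid x_j)}$ (equivalently $\frac{\pi(x^{(j)})p^{\mathrm{RN}}_\eta(e(j)\mid x^{(j)})}{\pi(x)p^{\mathrm{RN}}_\eta(e(j)\mid x)}$ with $e(j)$ the $j$-th standard basis vector), $Z_j(x)=(1-\omega)g(1)+\omega\,g(t_j(x))$, and the one-coordinate step probabilities $s_j(x,x^{(j)})=\omega g(t_j(x))/Z_j(x)$, $s_j(x,x)=(1-\omega)g(1)/Z_j(x)$ (zero for other targets). PARNI proposal: from $\gamma$, draw $k\sim p^{\mathrm{RN}}_\eta(\cdot\mid\gamma)$, order $\{j:k_j=1\}$ as $(K_1,\dots,K_{p_k})$, set $\gamma(0)=\gamma$ and successively draw $\gamma(r)\sim s_{K_r}(\gamma(r-1),\cdot)$; the proposal is $\gamma'=\gamma(p_k)$. *)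

theory Defs
  imports Complex_Main
begin

text \<open>States of \<Gamma> = {0,1}^p are functions 'n \<Rightarrow> bool for a finite index type 'n
  with p = CARD('n).\<close>

definition flip :: "('n \<Rightarrow> bool) \<Rightarrow> 'n \<Rightarrow> ('n \<Rightarrow> bool)" where
  "flip x j = x(j := \<not> x j)"

text \<open>p_j(c | b): probability that k_j = c given gamma_j = b.\<close>
definition pj :: "('n \<Rightarrow> real) \<Rightarrow> ('n \<Rightarrow> real) \<Rightarrow> 'n \<Rightarrow> bool \<Rightarrow> bool \<Rightarrow> real" where
  "pj A D j b c = (if b then (if c then D j else 1 - D j) else (if c then A j else 1 - A j))"

definition pRN :: "('n::finite \<Rightarrow> real) \<Rightarrow> ('n \<Rightarrow> real) \<Rightarrow> ('n \<Rightarrow> bool) \<Rightarrow> ('n \<Rightarrow> bool) \<Rightarrow> real" where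
  "pRN A D k \<gamma> = (\<Prod>j\<in>UNIV. pj A D j (\<gamma> j) (k j))"

definition tj :: "(('n \<Rightarrow> bool) \<Rightarrow> real) \<Rightarrow> ('n \<Rightarrow> real) \<Rightarrow> ('n \<Rightarrow> real) \<Rightarrow> 'n \<Rightarrow> ('n \<Rightarrow> bool) \<Rightarrow> real" where
  "tj \<pi> A D j x = (\<pi> (flip x j) * pj A D j (flip x j j) True) / (\<pi> x * pj A D j (x j) True)"

definition Zj :: "(real \<Rightarrow> real) \<Rightarrow> real \<Rightarrow> (('n \<Rightarrow> bool) \<Rightarrow> real) \<Rightarrow> ('n \<Rightarrow> real) \<Rightarrow> ('n \<Rightarrow> real)
    \<Rightarrow> 'n \<Rightarrow> ('n \<Rightarrow> bool) \<Rightarrow> real" where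
  "Zj g \<omega> \<pi> A D j x = (1 - \<omega>) * g 1 + \<omega> * g (tj \<pi> A D j x)"

definition sj :: "(real \<Rightarrow> real) \<Rightarrow> real \<Rightarrow> (('n \<Rightarrow> bool) \<Rightarrow> real) \<Rightarrow> ('n \<Rightarrow> real) \<Rightarrow> ('n \<Rightarrow> real)
    \<Rightarrow> 'n \<Rightarrow> ('n \<Rightarrow> bool) \<Rightarrow> ('n \<Rightarrow> bool) \<Rightarrow> real" where
  "sj g \<omega> \<pi> A D j x y =
     (if y = flip x j then \<omega> * g (tj \<pi> A D j x) / Zj g \<omega> \<pi> A D j x
      else if y = x then (1 - \<omega>) * g 1 / Zj g \<omega> \<pi> A D j x
      else 0)"

end

theory Submission
  imports Defs
begin

lemma flip_ne: "flip x j \<noteq> x"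
  unfolding flip_def by (metis fun_upd_same)

lemma flip_flip: "flip (flip x j) j = x"
  unfolding flip_def by auto

lemma pj_pos:
  assumes "\<And>j. 0 < A j \<and> A j < 1" "\<And>j. 0 < D j \<and> D j < 1"
  shows "pj A D j b c > 0"
  using assms[of j] unfolding pj_def by auto

lemma pRN_pos:
  assumes "\<And>j. 0 < A j \<and> A j < 1" "\<And>j. 0 < D j \<and> D j < 1"
  shows "pRN A D k x > 0"
  unfolding pRN_def by (rule prod_pos) (rule pj_pos[of A D, OF assms])

lemma pRN_flip:
  fixes x :: "'n::finite \<Rightarrow> bool"
  assumes "k j"
  shows "pRN A D k (flip x j) * pj A D j (x j) True = pRN A D k x * pj A D j (flip x j j) True"
proof -
  have eq: "(\<Prod>i\<in>UNIV-{j}. pj A D i (flip x j i) (k i)) = (\<Prod>i\<in>UNIV-{j}. pj A D i (x i) (k i))"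
    by (rule prod.cong) (auto simp: flip_def)
  have "pRN A D k (flip x j) = pj A D j (flip x j j) True * (\<Prod>i\<in>UNIV-{j}. pj A D i (flip x j i) (k i))"
    unfolding pRN_def using assms by (simp add: prod.remove[of UNIV j])
  moreover have "pRN A D k x = pj A D j (x j) True * (\<Prod>i\<in>UNIV-{j}. pj A D i (x i) (k i))"
    unfolding pRN_def using assms by (simp add: prod.remove[of UNIV j])
  ultimately show ?thesis using eq by simp
qed

lemma tj_pos:
  assumes "\<And>x. \<pi> x > 0" "\<And>j. 0 < A j \<and> A j < 1" "\<And>j. 0 < D j \<and> D j < 1"
  shows "tj \<pi> A D j x > 0"
  unfolding tj_def using assms(1) pj_pos[of A D, OF assms(2,3)] by (simp add: divide_pos_pos)

lemma tj_flip:
  assumes "\<And>x. \<pi> x > 0" "\<And>j. 0 < A j \<and> A j < 1" "\<And>j. 0 < D j \<and> D j < 1"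
  shows "tj \<pi> A D j (flip x j) = 1 / tj \<pi> A D j x"
  unfolding tj_def flip_flip by simp

lemma Zj_pos:
  assumes "\<And>x. \<pi> x > 0" "\<And>j. 0 < A j \<and> A j < 1" "\<And>j. 0 < D j \<and> D j < 1"
    and "\<And>t. t > 0 \<Longrightarrow> g t > 0" "0 < \<omega>" "\<omega> < 1"
  shows "Zj g \<omega> \<pi> A D j x > 0"
proof -
  have "g (tj \<pi> A D j x) > 0" using assms(4) tj_pos[of \<pi> A D, OF assms(1-3)] by blast
  moreover have "g 1 > 0" using assms(4) by simp
  ultimately show ?thesis unfolding Zj_def using assms(5,6)
    by (simp add: add_pos_pos)
qed

lemma sj_pos:
  assumes "\<And>x. \<pi> x > 0" "\<And>j. 0 < A j \<and> A j < 1" "\<And>j. 0 < D j \<and> D j < 1"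
    and "\<And>t. t > 0 \<Longrightarrow> g t > 0" "0 < \<omega>" "\<omega> < 1"
    and "y = x \<or> y = flip x j"
  shows "sj g \<omega> \<pi> A D j x y > 0"
proof -
  have Z: "Zj g \<omega> \<pi> A D j x > 0" by (rule Zj_pos[of \<pi> A D g \<omega>, OF assms(1-6)])
  have "g (tj \<pi> A D j x) > 0" using assms(4) tj_pos[of \<pi> A D, OF assms(1-3)] by blast
  moreover have "g 1 > 0" using assms(4) by simp
  ultimately show ?thesis unfolding sj_def using assms(5,6,7) Z flip_ne[of x j]
    by auto
qed

lemma step_identity:
  fixes x :: "'n::finite \<Rightarrow> bool"
  assumes pi: "\<And>x. \<pi> x > 0" and AA: "\<And>j. 0 < A j \<and> A j < 1" and DD: "\<And>j. 0 < D j \<and> D j < 1"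
    and gp: "\<And>t. t > 0 \<Longrightarrow> g t > 0" and om: "0 < \<omega>" "\<omega> < 1"
    and gb: "\<And>t. t > 0 \<Longrightarrow> g t = t * g (1 / t)"
    and kj: "k j"
    and y: "y = x \<or> y = flip x j"
  shows "\<pi> y * pRN A D k y * sj g \<omega> \<pi> A D j y x * Zj g \<omega> \<pi> A D j y
       = \<pi> x * pRN A D k x * sj g \<omega> \<pi> A D j x y * Zj g \<omega> \<pi> A D j x"
  using y
proof
  assume "y = x" thus ?thesis by simp
next
  assume yf: "y = flip x j"
  have Zx: "Zj g \<omega> \<pi> A D j x > 0" by (rule Zj_pos[of \<pi> A D g \<omega>, OF pi AA DD gp om])
  have Zy: "Zj g \<omega> \<pi> A D j y > 0" by (rule Zj_pos[of \<pi> A D g \<omega>, OF pi AA DD gp om])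
  have xy: "x = flip y j" using yf flip_flip by metis
  have sy: "sj g \<omega> \<pi> A D j y x = \<omega> * g (tj \<pi> A D j y) / Zj g \<omega> \<pi> A D j y"
    unfolding sj_def using xy by simp
  have sx: "sj g \<omega> \<pi> A D j x y = \<omega> * g (tj \<pi> A D j x) / Zj g \<omega> \<pi> A D j x"
    unfolding sj_def using yf by simp
  define t where "t = tj \<pi> A D j x"
  have tp: "t > 0" unfolding t_def by (rule tj_pos[of \<pi> A D, OF pi AA DD])
  have ty: "tj \<pi> A D j y = 1 / t" unfolding t_def yf by (rule tj_flip[of \<pi> A D, OF pi AA DD])
  have px: "pj A D j (x j) True > 0" "pj A D j (y j) True > 0" using pj_pos[of A D, OF AA DD] by auto
  have pr: "pRN A D k y * pj A D j (x j) True = pRN A D k x * pj A D j (y j) True"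
    using pRN_flip[of k j A D x, OF kj] yf by simp
  have tdef: "t = \<pi> y * pj A D j (y j) True / (\<pi> x * pj A D j (x j) True)"
    unfolding t_def tj_def yf by simp
  have key: "\<pi> y * pRN A D k y = \<pi> x * pRN A D k x * t"
  proof -
    have "\<pi> x * pRN A D k x * t * pj A D j (x j) True
        = \<pi> y * pj A D j (y j) True * pRN A D k x"
      using tdef pi[of x] px by (simp add: field_simps)
    also have "\<dots> = \<pi> y * pRN A D k y * pj A D j (x j) True"
      using pr by (simp add: algebra_simps)
    finally show ?thesis using px by simp
  qed
  have "\<pi> y * pRN A D k y * sj g \<omega> \<pi> A D j y x * Zj g \<omega> \<pi> A D j y
       = \<pi> x * pRN A D k x * t * \<omega> * g (1/t)"
    using sy ty key Zy by simp
  also have "\<dots> = \<pi> x * pRN A D k x * \<omega> * g t"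
    using gb[OF tp] by simp
  also have "\<dots> = \<pi> x * pRN A D k x * sj g \<omega> \<pi> A D j x y * Zj g \<omega> \<pi> A D j x"
    using sx Zx t_def by simp
  finally show ?thesis .
qed

theorem proposition3:
  fixes \<pi> :: "('n::finite \<Rightarrow> bool) \<Rightarrow> real"
    and g :: "real \<Rightarrow> real"
    and \<epsilon> \<omega> :: real
    and A D :: "'n \<Rightarrow> real"
    and \<gamma> k :: "'n \<Rightarrow> bool"
    and Ks :: "'n list"
    and path :: "nat \<Rightarrow> ('n \<Rightarrow> bool)"
  assumes pi_pos: "\<And>x. \<pi> x > 0"
    and g_pos: "\<And>t. t > 0 \<Longrightarrow> g t > 0"
    and g_cont: "continuous_on {0<..} g"
    and g_bal: "\<And>t. t > 0 \<Longrightarrow> g t = t * g (1 / t)"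
    and eps: "0 < \<epsilon>" "\<epsilon> < 1/2"
    and A: "\<And>j. \<epsilon> < A j \<and> A j < 1 - \<epsilon>"
    and D: "\<And>j. \<epsilon> < D j \<and> D j < 1 - \<epsilon>"
    and om: "\<epsilon> < \<omega>" "\<omega> < 1 - \<epsilon>"
    and Ks: "distinct Ks" "set Ks = {j. k j}"
    and pk: "length Ks \<ge> 1"
    and path0: "path 0 = \<gamma>"
    and path_step: "\<And>r. 1 \<le> r \<Longrightarrow> r \<le> length Ks \<Longrightarrow>
                      path r = path (r - 1) \<or> path r = flip (path (r - 1)) (Ks ! (r - 1))"
  shows "let pk = length Ks; K = (\<lambda>r. Ks ! (r - 1)); \<gamma>' = path pk;
             q = (\<Prod>r=1..pk. sj g \<omega> \<pi> A D (K r) (path (r - 1)) (path r));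
             q' = (\<Prod>r=1..pk. sj g \<omega> \<pi> A D (K (pk - r + 1)) (path (pk - r + 1)) (path (pk - r)));
             Z = (\<lambda>r. Zj g \<omega> \<pi> A D (K r) (path (r - 1)));
             Z' = (\<lambda>r. Zj g \<omega> \<pi> A D (K (pk - r + 1)) (path (pk - r + 1)));
             ratio = (\<pi> \<gamma>' * pRN A D k \<gamma>' * q') / (\<pi> \<gamma> * pRN A D k \<gamma> * q)
         in ratio = (\<Prod>r=1..pk. Z r / Z' r) \<and> min 1 ratio = min 1 (\<Prod>r=1..pk. Z r / Z' r)"
proof -
  define n where "n = length Ks"
  define K where "K = (\<lambda>r. Ks ! (r - 1))"
  define W where "W = (\<lambda>x. \<pi> x * pRN A D k x)"
  define sf where "sf = (\<lambda>r. sj g \<omega> \<pi> A D (K r) (path (r - 1)) (path r))"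
  define sr where "sr = (\<lambda>r. sj g \<omega> \<pi> A D (K r) (path r) (path (r - 1)))"
  define Zf where "Zf = (\<lambda>r. Zj g \<omega> \<pi> A D (K r) (path (r - 1)))"
  define Zr where "Zr = (\<lambda>r. Zj g \<omega> \<pi> A D (K r) (path r))"
  have AA: "\<And>j. 0 < A j \<and> A j < 1" using A eps by (smt (verit))
  have DD: "\<And>j. 0 < D j \<and> D j < 1" using D eps by (smt (verit))
  have om': "0 < \<omega>" "\<omega> < 1" using om eps by auto
  have kK: "\<And>r. 1 \<le> r \<Longrightarrow> r \<le> n \<Longrightarrow> k (K r)"
    proof -
    fix r assume "1 \<le> r" "r \<le> n"
    hence "r - 1 < length Ks" unfolding n_def by linarith
    hence "Ks ! (r - 1) \<in> set Ks" by (rule nth_mem)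
    thus "k (K r)" using Ks(2) unfolding K_def by simp
  qed
  have stp: "\<And>r. 1 \<le> r \<Longrightarrow> r \<le> n \<Longrightarrow> path r = path (r - 1) \<or> path r = flip (path (r - 1)) (K r)"
    using path_step unfolding K_def n_def by blast
  have sfp: "\<And>r. 1 \<le> r \<Longrightarrow> r \<le> n \<Longrightarrow> sf r > 0"
    unfolding sf_def using sj_pos[of \<pi> A D g \<omega>, OF pi_pos AA DD g_pos om'] stp by blast
  have Zrp: "\<And>r. Zr r > 0" unfolding Zr_def using Zj_pos[of \<pi> A D g \<omega>, OF pi_pos AA DD g_pos om'] by blast
  have Zfp: "\<And>r. Zf r > 0" unfolding Zf_def using Zj_pos[of \<pi> A D g \<omega>, OF pi_pos AA DD g_pos om'] by blast
  have stepid: "\<And>r. 1 \<le> r \<Longrightarrow> r \<le> n \<Longrightarrow> W (path r) * sr r * Zr r = W (path (r - 1)) * sf r * Zf r"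
    unfolding W_def sr_def Zr_def sf_def Zf_def
    using step_identity[of \<pi> A D g \<omega>, OF pi_pos AA DD g_pos om' g_bal] kK stp by blast
  have ind: "m \<le> n \<Longrightarrow> W (path m) * prod sr {1..m} * prod Zr {1..m}
      = W (path 0) * prod sf {1..m} * prod Zf {1..m}" for m
  proof (induction m)
    case 0 then show ?case by simp
  next
    case (Suc m)
    have IH: "W (path m) * prod sr {1..m} * prod Zr {1..m}
      = W (path 0) * prod sf {1..m} * prod Zf {1..m}" using Suc by simp
    have S: "W (path (Suc m)) * sr (Suc m) * Zr (Suc m) = W (path m) * sf (Suc m) * Zf (Suc m)"
      using stepid[of "Suc m"] Suc.prems by simp
    have "W (path (Suc m)) * prod sr {1..Suc m} * prod Zr {1..Suc m}
       = (W (path (Suc m)) * sr (Suc m) * Zr (Suc m)) * prod sr {1..m} * prod Zr {1..m}"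
      by (simp add: algebra_simps)
    also have "\<dots> = (W (path m) * prod sr {1..m} * prod Zr {1..m}) * sf (Suc m) * Zf (Suc m)"
      using S by (simp add: algebra_simps)
    also have "\<dots> = W (path 0) * prod sf {1..Suc m} * prod Zf {1..Suc m}"
      using IH by (simp add: algebra_simps)
    finally show ?case .
  qed
  have main: "W (path n) * prod sr {1..n} * prod Zr {1..n} = W (path 0) * prod sf {1..n} * prod Zf {1..n}"
    using ind by simp
  have rev1: "(\<Prod>r=1..n. sj g \<omega> \<pi> A D (K (n - r + 1)) (path (n - r + 1)) (path (n - r))) = prod sr {1..n}"
  proof -
    have "prod sr {1..n} = (\<Prod>r=1..n. sr (n + 1 - r))" by (rule prod.atLeastAtMost_rev)
    also have "\<dots> = (\<Prod>r=1..n. sj g \<omega> \<pi> A D (K (n - r + 1)) (path (n - r + 1)) (path (n - r)))"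
      by (rule prod.cong) (auto simp: sr_def Suc_diff_le)
    finally show ?thesis by simp
  qed
  have rev2: "(\<Prod>r=1..n. Zj g \<omega> \<pi> A D (K (n - r + 1)) (path (n - r + 1))) = prod Zr {1..n}"
  proof -
    have "prod Zr {1..n} = (\<Prod>r=1..n. Zr (n + 1 - r))" by (rule prod.atLeastAtMost_rev)
    also have "\<dots> = (\<Prod>r=1..n. Zj g \<omega> \<pi> A D (K (n - r + 1)) (path (n - r + 1)))"
      by (rule prod.cong) (auto simp: Zr_def Suc_diff_le)
    finally show ?thesis by simp
  qed
  have Wp: "\<And>x. W x > 0" unfolding W_def using pi_pos pRN_pos[of A D, OF AA DD] by (simp add: mult_pos_pos)
  have pf: "prod sf {1..n} > 0" by (rule prod_pos) (use sfp in auto)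
  have pzr: "prod Zr {1..n} > 0" using Zrp by (simp add: prod_pos)
  have ratio: "W (path n) * prod sr {1..n} / (W \<gamma> * prod sf {1..n}) = (\<Prod>r=1..n. Zf r / Zr r)"
  proof -
    have "(\<Prod>r=1..n. Zf r / Zr r) = prod Zf {1..n} / prod Zr {1..n}" by (rule prod_dividef)
    also have "\<dots> = W (path n) * prod sr {1..n} / (W \<gamma> * prod sf {1..n})"
      proof (subst frac_eq_eq)
      show "prod Zr {1..n} \<noteq> 0" using pzr by linarith
      show "W \<gamma> * prod sf {1..n} \<noteq> 0" using mult_pos_pos[OF Wp[of \<gamma>] pf] by linarith
      show "prod Zf {1..n} * (W \<gamma> * prod sf {1..n}) = W (path n) * prod sr {1..n} * prod Zr {1..n}"
        using main path0 by (simp add: algebra_simps)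
    qed
    finally show ?thesis by simp
  qed
  have R: "(\<pi> (path n) * pRN A D k (path n) * (\<Prod>r=1..n. sj g \<omega> \<pi> A D (K (n - r + 1)) (path (n - r + 1)) (path (n - r))))
        / (\<pi> \<gamma> * pRN A D k \<gamma> * (\<Prod>r=1..n. sj g \<omega> \<pi> A D (K r) (path (r - 1)) (path r)))
     = (\<Prod>r=1..n. Zj g \<omega> \<pi> A D (K r) (path (r - 1)) / Zj g \<omega> \<pi> A D (K (n - r + 1)) (path (n - r + 1)))"
  proof -
    have "(\<Prod>r=1..n. Zj g \<omega> \<pi> A D (K r) (path (r - 1)) / Zj g \<omega> \<pi> A D (K (n - r + 1)) (path (n - r + 1)))
       = (\<Prod>r=1..n. Zj g \<omega> \<pi> A D (K r) (path (r - 1))) / (\<Prod>r=1..n. Zj g \<omega> \<pi> A D (K (n - r + 1)) (path (n - r + 1)))"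
      by (rule prod_dividef)
    also have "\<dots> = prod Zf {1..n} / prod Zr {1..n}" using rev2 unfolding Zf_def by simp
    also have "\<dots> = (\<Prod>r=1..n. Zf r / Zr r)" by (rule prod_dividef[symmetric])
    finally show ?thesis using ratio rev1 unfolding W_def sf_def by (simp add: mult.assoc)
  qed
  show ?thesis unfolding Let_def using R unfolding n_def K_def by simp
qed

end
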